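(* Let $L:\mathbb{R}^d\to\mathbb{R}^{\mathcal{Y}}_+$ be a polyhedral loss, $\ell:\mathcal{R}\to\mathbb{R}^{\mathcal{Y}}_+$ a discrete loss, $\|\cdot\|$ a norm on $\mathbb{R}^d$, and $\psi:\mathbb{R}^d\to\mathcal{R}$ a link. Then $(L,\psi)$ is calibrated with respect to $\ell$ if and only if there exists $\epsilon>0$ such that $\psi$ is produced by the general $\epsilon$-thickened link construction for $L$, $\mathrm{prop}[\ell]$, $\epsilon$, $\|\cdot\|$.
   Context: $\mathcal{Y}$ is a finite label set, $\Delta_{\mathcal{Y}}$ the simplex, $\mathbb{R}^{\mathcal{Y}}_+$ the nonnegative orthant. A loss $L:\mathcal{R}\to\mathbb{R}^{\mathcal{Y}}_+$ is discrete if $\mathcal{R}$ is finite; $L:\mathbb{R}^d\to\mathbb{R}^{\mathcal{Y}}_+$ is polyhedral if each coordinate is a max of finitely many affine functions. For losses whose expected loss $\langle p,L(\cdot)\rangle$ attains its minimum for each $p$ (true for polyhedral and discrete losses), $\mathrm{prop}[L](p)=\arg\min_r\langle p,L(r)\rangle$, with level sets $\mathrm{prop}[L]_r=\{p:r\in\mathrm{prop}[L](p)\}$. $L$ indirectly elicits $\gamma$ if for all $u$ there is $r$ with $\mathrm{prop}[L]_u\subseteq\gamma_r$. Calibration: for all $p$, $\inf_{u:\psi(u)\notin\mathrm{prop}[\ell](p)}\langle p,L(u)\rangle>\inf_u\langle p,L(u)\rangle$. General $\epsilon$-thickened link construction for a polyhedral $L$, a finite property $\gamma:\Delta_{\mathcal{Y}}\rightrightarrows\mathcal{R}$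 indirectly elicited by $L$, $\epsilon>0$ and a norm $\|\cdot\|$: let $\Gamma=\mathrm{prop}[L]$, $\mathcal{U}=\{\Gamma(p):p\in\Delta_{\mathcal{Y}}\}$, $\Gamma_U=\{p:\Gamma(p)=U\}$ and $R_U=\{r\in\mathcal{R}:\Gamma_U\subseteq\gamma_r\}$ for $U\in\mathcal{U}$. Initialize $\Psi(u)=\mathcal{R}$ for all $u$; for each $U\in\mathcal{U}$ and each $u$ with $\inf_{u^*\in U}\|u^*-u\|<\epsilon$ set $\Psi(u)\leftarrow\Psi(u)\cap R_U$. If $\Psi(u)\neq\emptyset$ for all $u$, the construction produces exactly the links $\psi$ with $\psi(u)\in\Psi(u)$ for all $u$. *)

theory Defs
  imports "HOL-Analysis.Analysis"
begin

text \<open>Label set: a finite type 'y. Surrogate space R^d: real^'d. Report set of the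
discrete loss: a finite type 'r. Losses are vector-valued in R^Y, i.e. functions into 'y => real.\<close>

definition prob_simplex :: "('y::finite \<Rightarrow> real) set" where
  "prob_simplex = {p. (\<forall>y. 0 \<le> p y) \<and> sum p UNIV = 1}"

definition expected :: "('y::finite \<Rightarrow> real) \<Rightarrow> ('y \<Rightarrow> real) \<Rightarrow> real" where
  "expected p v = (\<Sum>y\<in>UNIV. p y * v y)"

definition is_norm :: "('a::real_vector \<Rightarrow> real) \<Rightarrow> bool" where
  "is_norm N \<longleftrightarrow> (\<forall>x. 0 \<le> N x) \<and> (\<forall>x. N x = 0 \<longleftrightarrow> x = 0)
     \<and> (\<forall>c x. N (c *\<^sub>R x) = \<bar>c\<bar> * N x) \<and> (\<forall>x y. N (x + y) \<le> N x + N y)"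

definition nonneg_loss :: "('a \<Rightarrow> 'y \<Rightarrow> real) \<Rightarrow> bool" where
  "nonneg_loss L \<longleftrightarrow> (\<forall>u y. 0 \<le> L u y)"

definition polyhedral_loss :: "(real^'d \<Rightarrow> 'y \<Rightarrow> real) \<Rightarrow> bool" where
  "polyhedral_loss L \<longleftrightarrow> nonneg_loss L \<and>
     (\<forall>y. \<exists>S :: ((real^'d) \<times> real) set. finite S \<and> S \<noteq> {} \<and>
          (\<forall>u. L u y = Max ((\<lambda>(a,b). a \<bullet> u + b) ` S)))"

text \<open>Discrete loss: finite report set (the type 'r is finite), nonnegative values.\<close>
definition discrete_loss :: "('r::finite \<Rightarrow> 'y \<Rightarrow> real) \<Rightarrow> bool" where
  "discrete_loss l \<longleftrightarrow> nonneg_loss l"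

definition prop_of :: "('a \<Rightarrow> 'y::finite \<Rightarrow> real) \<Rightarrow> ('y \<Rightarrow> real) \<Rightarrow> 'a set" where
  "prop_of L p = {r. \<forall>r'. expected p (L r) \<le> expected p (L r')}"

definition level_set :: "(('y::finite \<Rightarrow> real) \<Rightarrow> 'a set) \<Rightarrow> 'a \<Rightarrow> ('y \<Rightarrow> real) set" where
  "level_set \<gamma> r = {p \<in> prob_simplex. r \<in> \<gamma> p}"

definition indirectly_elicits ::
  "('a \<Rightarrow> 'y::finite \<Rightarrow> real) \<Rightarrow> (('y \<Rightarrow> real) \<Rightarrow> 'r set) \<Rightarrow> bool" where
  "indirectly_elicits L \<gamma> \<longleftrightarrow> (\<forall>u. \<exists>r. level_set (prop_of L) u \<subseteq> level_set \<gamma> r)"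

text \<open>Calibration of (L, psi) w.r.t. l; infima taken in the extended reals (inf of empty = +inf).\<close>
definition calibrated ::
  "('a \<Rightarrow> 'y::finite \<Rightarrow> real) \<Rightarrow> ('a \<Rightarrow> 'r) \<Rightarrow> ('r \<Rightarrow> 'y \<Rightarrow> real) \<Rightarrow> bool" where
  "calibrated L \<psi> l \<longleftrightarrow> (\<forall>p\<in>prob_simplex.
     (INF u\<in>{u. \<psi> u \<notin> prop_of l p}. ereal (expected p (L u))) > (INF u. ereal (expected p (L u))))"

definition cells :: "('a \<Rightarrow> 'y::finite \<Rightarrow> real) \<Rightarrow> 'a set set" where
  "cells L = {prop_of L p | p. p \<in> prob_simplex}"

definition cell_region :: "('a \<Rightarrow> 'y::finite \<Rightarrow> real) \<Rightarrow> 'a set \<Rightarrow> ('y \<Rightarrow> real) set" where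
  "cell_region L U = {p \<in> prob_simplex. prop_of L p = U}"

definition cell_reports ::
  "('a \<Rightarrow> 'y::finite \<Rightarrow> real) \<Rightarrow> (('y \<Rightarrow> real) \<Rightarrow> 'r set) \<Rightarrow> 'a set \<Rightarrow> 'r set" where
  "cell_reports L \<gamma> U = {r. cell_region L U \<subseteq> level_set \<gamma> r}"

definition thick_Psi ::
  "('a::real_vector \<Rightarrow> 'y::finite \<Rightarrow> real) \<Rightarrow> (('y \<Rightarrow> real) \<Rightarrow> 'r set) \<Rightarrow> real
     \<Rightarrow> ('a \<Rightarrow> real) \<Rightarrow> 'a \<Rightarrow> 'r set" where
  "thick_Psi L \<gamma> \<epsilon> N u =
     UNIV \<inter> (\<Inter>{cell_reports L \<gamma> U | U. U \<in> cells L \<and> (INF us\<in>U. ereal (N (us - u))) < ereal \<epsilon>})"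

definition produced_by_thickened_link ::
  "('a::real_vector \<Rightarrow> 'y::finite \<Rightarrow> real) \<Rightarrow> (('y \<Rightarrow> real) \<Rightarrow> 'r set) \<Rightarrow> real
     \<Rightarrow> ('a \<Rightarrow> real) \<Rightarrow> ('a \<Rightarrow> 'r) \<Rightarrow> bool" where
  "produced_by_thickened_link L \<gamma> \<epsilon> N \<psi> \<longleftrightarrow>
     indirectly_elicits L \<gamma> \<and> 0 < \<epsilon> \<and> is_norm N \<and>
     (\<forall>u. thick_Psi L \<gamma> \<epsilon> N u \<noteq> {}) \<and> (\<forall>u. \<psi> u \<in> thick_Psi L \<gamma> \<epsilon> N u)"

end

theory Submission
  imports Defs
begin



definition maff :: "('a::euclidean_space \<times> real) set \<Rightarrow> 'a \<Rightarrow> real" where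
  "maff S u = Max ((\<lambda>(a,b). a \<bullet> u + b) ` S)"

lemma maff_ge: "finite S \<Longrightarrow> (c,e) \<in> S \<Longrightarrow> c \<bullet> u + e \<le> maff S u"
  unfolding maff_def by (rule Max_ge) force+

lemma maff_in: "finite S \<Longrightarrow> S \<noteq> {} \<Longrightarrow> \<exists>c e. (c,e) \<in> S \<and> maff S u = c \<bullet> u + e"
proof -
  assume "finite S" "S \<noteq> {}"
  then have "maff S u \<in> (\<lambda>(a,b). a \<bullet> u + b) ` S" unfolding maff_def by (intro Max_in) auto
  then show ?thesis by auto
qed

lemma maff_le: "finite S \<Longrightarrow> S \<noteq> {} \<Longrightarrow> (\<And>c e. (c,e) \<in> S \<Longrightarrow> c \<bullet> u + e \<le> M) \<Longrightarrow> maff S u \<le> M"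
  using maff_in by metis

lemma maff_lip:
  assumes "finite S" "S \<noteq> {}" "\<And>c e. (c,e) \<in> S \<Longrightarrow> norm c \<le> K"
  shows "maff S x \<le> maff S w + K * norm (x - w)"
proof -
  obtain c e where ce: "(c,e) \<in> S" "maff S x = c \<bullet> x + e" using maff_in assms by metis
  have "c \<bullet> x + e = (c \<bullet> w + e) + c \<bullet> (x - w)" by (simp add: inner_diff_right)
  also have "\<dots> \<le> maff S w + norm c * norm (x - w)"
    using maff_ge[OF assms(1) ce(1)] Cauchy_Schwarz_ineq2[of c "x-w"] by (smt (verit) norm_cauchy_schwarz)
  also have "\<dots> \<le> maff S w + K * norm (x - w)"
    using assms(3)[OF ce(1)] by (simp add: mult_right_mono)
  finally show ?thesis using ce by simp
qed

lemma maff_cont: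
  assumes "finite S" "S \<noteq> {}"
  shows "continuous_on A (maff S)"
proof -
  define K where "K = Max ((\<lambda>(c,e). norm c) ` S)"
  have K: "norm c \<le> K" if "(c,e) \<in> S" for c e
    unfolding K_def using assms that by (intro Max_ge) force+
  have lip: "maff S x \<le> maff S w + K * norm (x - w)" for x w
    using maff_lip[OF assms] K by blast
  have "dist (maff S x) (maff S w) \<le> K * dist x w" for x w
    using lip[of x w] lip[of w x]
    by (simp add: dist_real_def dist_norm norm_minus_commute abs_le_iff)
  moreover have "0 \<le> K" using assms K by (metis ex_in_conv norm_ge_zero order.trans surj_pair)
  ultimately show ?thesis
    by (intro lipschitz_on_continuous_on[of K] lipschitz_onI) auto
qed

lemma maff_mono:
  assumes "finite S" "S0 \<subseteq> S" "S0 \<noteq> {}"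
  shows "maff S0 u \<le> maff S u"
proof -
  have "finite S0" using assms finite_subset by blast
  then show ?thesis using assms by (intro maff_le) (auto intro: maff_ge)
qed

lemma maff_orth:
  assumes "\<And>c e. (c,e) \<in> S \<Longrightarrow> c \<bullet> w = 0"
  shows "maff S (y + w) = maff S y"
  unfolding maff_def
  by (rule arg_cong[where f=Max], rule image_cong) (auto simp: inner_add_right assms)

lemma maff_main:
  fixes S :: "('a::euclidean_space \<times> real) set"
  assumes "finite S" "S \<noteq> {}" "\<And>u. B \<le> maff S u"
  shows "\<exists>z. (\<forall>u. maff S z \<le> maff S u) \<and>
    (\<forall>\<epsilon>>0. \<exists>\<delta>>0. \<forall>u. maff S u < maff S z + \<delta> \<longrightarrow>
        (\<exists>z'. maff S z' = maff S z \<and> dist u z' < \<epsilon>))"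
  using assms
proof (induction "card S" arbitrary: S B rule: less_induct)
  case less
  note fin = less.prems(1) and ne = less.prems(2) and bdd = less.prems(3)
  define Lc where "Lc = Max ((\<lambda>(c,e). norm c) ` S)"
  have Lc: "norm c \<le> Lc" if "(c,e) \<in> S" for c e
    unfolding Lc_def using fin that by (intro Max_ge) force+
  have Lc0: "0 \<le> Lc" using ne Lc by (metis ex_in_conv norm_ge_zero order.trans surj_pair)
  have lip: "maff S x \<le> maff S w + Lc * norm (x - w)" for x w
    using maff_lip[OF fin ne] Lc by blast
  show ?case
  proof (cases "\<exists>d. (\<forall>(c,e)\<in>S. c \<bullet> d \<le> 0) \<and> (\<exists>(c,e)\<in>S. c \<bullet> d < 0)")
    case True
    then obtain d c1 e1 where d1: "\<And>c e. (c,e) \<in> S \<Longrightarrow> c \<bullet> d \<le> 0"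
      and c1: "(c1,e1) \<in> S" "c1 \<bullet> d < 0" by blast
    define S0 where "S0 = {(c,e)\<in>S. c \<bullet> d = 0}"
    define Sm where "Sm = {(c,e)\<in>S. c \<bullet> d < 0}"
    have finm: "finite Sm" "Sm \<noteq> {}"
      using fin c1 by (auto simp: Sm_def intro: finite_subset[rotated])
    define \<kappa> where "\<kappa> = Min ((\<lambda>(c,e). - (c \<bullet> d)) ` Sm)"
    have \<kappa>pos: "\<kappa> > 0" unfolding \<kappa>_def using finm
      by (subst Min_gr_iff) (auto simp: Sm_def)
    have \<kappa>le: "c \<bullet> d \<le> - \<kappa>" if "(c,e) \<in> S" "c \<bullet> d \<noteq> 0" for c e
    proof -
      have "(c,e) \<in> Sm" using that d1[OF that(1)] unfolding Sm_def by auto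
      then have "\<kappa> \<le> - (c \<bullet> d)" unfolding \<kappa>_def using finm by (intro Min_le) force+
      then show ?thesis by simp
    qed
    have fin0: "finite S0" using fin by (auto simp: S0_def intro: finite_subset[rotated])
    have push: "\<exists>t\<ge>0. t * \<kappa> \<le> max 0 (maff S u - M) \<and> maff S (u + t *\<^sub>R d) \<le> M"
      if hyp: "\<And>c e. (c,e) \<in> S0 \<Longrightarrow> c \<bullet> u + e \<le> M" for u M
    proof -
      define t where "t = max 0 (maff S u - M) / \<kappa>"
      have t0: "t \<ge> 0" and tk: "t * \<kappa> = max 0 (maff S u - M)"
        using \<kappa>pos unfolding t_def by auto
      have "maff S (u + t *\<^sub>R d) \<le> M"
      proof (rule maff_le[OF fin ne])
        fix c e assume ce: "(c,e) \<in> S"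
        show "c \<bullet> (u + t *\<^sub>R d) + e \<le> M"
        proof (cases "c \<bullet> d = 0")
          case True
          then show ?thesis using hyp[of c e] ce by (simp add: S0_def inner_add_right)
        next
          case False
          have "c \<bullet> (u + t *\<^sub>R d) + e = (c \<bullet> u + e) + t * (c \<bullet> d)"
            by (simp add: inner_add_right)
          also have "\<dots> \<le> maff S u + t * (- \<kappa>)"
            using maff_ge[OF fin ce, of u] \<kappa>le[OF ce False] t0
            by (intro add_mono mult_left_mono) auto
          also have "\<dots> \<le> M" using tk by (simp add: max_def split: if_splits)
          finally show ?thesis .
        qed
      qed
      then show ?thesis using t0 tk by auto
    qed
    have ne0: "S0 \<noteq> {}"
    proof
      assume "S0 = {}"
      then obtain t where "maff S (0 + t *\<^sub>R d) \<le> B - 1" using push[of 0 "B - 1"] by blast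
      then show False using bdd[of "0 + t *\<^sub>R d"] by simp
    qed
    have sub0: "S0 \<subseteq> S" unfolding S0_def by auto
    have mono0: "maff S0 u \<le> maff S u" for u by (rule maff_mono[OF fin sub0 ne0])
    have card0: "card S0 < card S"
    proof (rule psubset_card_mono[OF fin])
      have "(c1,e1) \<notin> S0" using c1 by (simp add: S0_def)
      then show "S0 \<subset> S" using sub0 c1 by blast
    qed
    have bdd0: "B \<le> maff S0 u" for u
    proof (rule ccontr)
      assume "\<not> B \<le> maff S0 u"
      have hyp: "c \<bullet> u + e \<le> maff S0 u" if "(c,e) \<in> S0" for c e
        using maff_ge[OF fin0 that] .
      obtain t where "maff S (u + t *\<^sub>R d) \<le> maff S0 u"
        using push[of u "maff S0 u", OF hyp] by blast
      then show False using bdd[of "u + t *\<^sub>R d"] \<open>\<not> B \<le> maff S0 u\<close> by simp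
    qed
    obtain z0 where z0min: "\<forall>u. maff S0 z0 \<le> maff S0 u"
      and sharp0: "\<forall>\<epsilon>>0. \<exists>\<delta>>0. \<forall>u. maff S0 u < maff S0 z0 + \<delta> \<longrightarrow>
        (\<exists>z'. maff S0 z' = maff S0 z0 \<and> dist u z' < \<epsilon>)"
      using less.hyps[OF card0 fin0 ne0 bdd0] by blast
    define m where "m = maff S0 z0"
    have geq: "m \<le> maff S v" for v
    proof -
      have "maff S0 z0 \<le> maff S0 v" using z0min by blast
      then show ?thesis using mono0[of v] unfolding m_def by linarith
    qed
    have toZ: "\<exists>t\<ge>0. t * \<kappa> \<le> max 0 (maff S u - m) \<and> maff S (u + t *\<^sub>R d) = m"
      if "maff S0 u = m" for u
    proof -
      have hyp: "c \<bullet> u + e \<le> m" if "(c,e) \<in> S0" for c e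
        using maff_ge[OF fin0 that, of u] \<open>maff S0 u = m\<close> by simp
      obtain t where "t \<ge> 0" "t * \<kappa> \<le> max 0 (maff S u - m)" "maff S (u + t *\<^sub>R d) \<le> m"
        using push[of u m, OF hyp] by blast
      then show ?thesis using geq[of "u + t *\<^sub>R d"] by auto
    qed
    obtain t where "maff S (z0 + t *\<^sub>R d) = m" using toZ[of z0] m_def by blast
    define z where "z = z0 + t *\<^sub>R d"
    have zm: "maff S z = m" using z_def \<open>maff S (z0 + t *\<^sub>R d) = m\<close> by simp
    have dne: "d \<noteq> 0" using c1 by auto
    have "\<exists>\<delta>>0. \<forall>u. maff S u < m + \<delta> \<longrightarrow> (\<exists>z'. maff S z' = m \<and> dist u z' < \<epsilon>)"
      if \<epsilon>: "\<epsilon> > 0" for \<epsilon>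
    proof -
      define q where "q = 1 + norm d * Lc / \<kappa>"
      have q1: "q \<ge> 1" unfolding q_def using Lc0 \<kappa>pos by simp
      define \<eta> where "\<eta> = \<epsilon> / (2 * q)"
      have \<eta>pos: "\<eta> > 0" unfolding \<eta>_def using \<epsilon> q1 by simp
      obtain \<delta>0 where \<delta>0: "\<delta>0 > 0" "\<forall>u. maff S0 u < m + \<delta>0 \<longrightarrow>
        (\<exists>z'. maff S0 z' = m \<and> dist u z' < \<eta>)"
        using sharp0 \<eta>pos unfolding m_def by blast
      define \<delta> where "\<delta> = min \<delta>0 (\<epsilon> * \<kappa> / (4 * norm d))"
      have \<delta>pos: "\<delta> > 0" unfolding \<delta>_def using \<delta>0 \<epsilon> \<kappa>pos dne by simp
      have main: "\<exists>z'. maff S z' = m \<and> dist u z' < \<epsilon>" if u: "maff S u < m + \<delta>" for u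
      proof -
        have "\<delta> \<le> \<delta>0" unfolding \<delta>_def by simp
        then have "maff S0 u < m + \<delta>0" using mono0[of u] u by linarith
        then obtain z1 where z1: "maff S0 z1 = m" "dist u z1 < \<eta>" using \<delta>0(2) by blast
        obtain t where t: "t \<ge> 0" "t * \<kappa> \<le> max 0 (maff S z1 - m)" "maff S (z1 + t *\<^sub>R d) = m"
          using toZ[OF z1(1)] by blast
        have nz: "norm (z1 - u) = dist u z1" by (simp add: dist_norm norm_minus_commute)
        have "Lc * dist u z1 \<le> Lc * \<eta>" using z1(2) Lc0 by (simp add: mult_left_mono)
        then have "maff S z1 \<le> m + \<delta> + Lc * \<eta>" using lip[of z1 u, unfolded nz] u by linarith
        moreover have "0 \<le> Lc * \<eta>" using Lc0 \<eta>pos by simp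
        ultimately have "max 0 (maff S z1 - m) \<le> \<delta> + Lc * \<eta>" using \<delta>pos by (simp add: max_def)
        then have tk: "t * \<kappa> \<le> \<delta> + Lc * \<eta>" using t(2) by linarith
        have tb: "t * norm d \<le> norm d * (\<delta> + Lc * \<eta>) / \<kappa>"
        proof -
          have "t \<le> (\<delta> + Lc * \<eta>) / \<kappa>" using tk \<kappa>pos by (simp add: pos_le_divide_eq)
          then have "t * norm d \<le> (\<delta> + Lc * \<eta>) / \<kappa> * norm d" by (rule mult_right_mono) simp
          then show ?thesis by (simp add: mult.commute)
        qed
        have dz: "dist z1 (z1 + t *\<^sub>R d) = t * norm d" using t(1) by (simp add: dist_norm)
        have "dist u (z1 + t *\<^sub>R d) \<le> dist u z1 + dist z1 (z1 + t *\<^sub>R d)" by (rule dist_triangle)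
        also have "\<dots> < \<eta> + norm d * (\<delta> + Lc * \<eta>) / \<kappa>" using z1(2) dz tb by linarith
        also have "\<dots> = \<eta> * q + norm d * \<delta> / \<kappa>"
          unfolding q_def using \<kappa>pos by (simp add: field_simps)
        also have "\<eta> * q = \<epsilon> / 2" unfolding \<eta>_def using q1 by simp
        also have "norm d * \<delta> / \<kappa> \<le> norm d * (\<epsilon> * \<kappa> / (4 * norm d)) / \<kappa>"
          using \<kappa>pos unfolding \<delta>_def by (intro divide_right_mono mult_left_mono) auto
        also have "\<dots> = \<epsilon> / 4" using dne \<kappa>pos by (simp add: field_simps)
        finally have "dist u (z1 + t *\<^sub>R d) < \<epsilon>" using \<epsilon> by linarith
        then show ?thesis using t(3) by blast
      qed
      show ?thesis using \<delta>pos main by blast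
    qed
    note sh = this
    have "\<forall>u. maff S z \<le> maff S u" using zm geq by simp
    then show ?thesis using sh zm by (intro exI[of _ z]) simp
  next
    case False
    have nod: "c \<bullet> d = 0" if a: "\<And>c e. (c,e) \<in> S \<Longrightarrow> c \<bullet> d \<le> 0" and b: "(c,e) \<in> S" for d c e
    proof (rule ccontr)
      assume "c \<bullet> d \<noteq> 0"
      then have "c \<bullet> d < 0" using a[OF b] by simp
      then have "(\<forall>(c,e)\<in>S. c \<bullet> d \<le> 0) \<and> (\<exists>(c,e)\<in>S. c \<bullet> d < 0)" using a b by auto
      then show False using False by blast
    qed
    define C where "C = fst ` S"
    define S0 where "S0 = (\<lambda>(c,e). (c, 0::real)) ` S"
    have finS0: "finite S0" "S0 \<noteq> {}" using fin ne unfolding S0_def by auto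
    have S0I: "(c, 0) \<in> S0" if "(c,e) \<in> S" for c e using that unfolding S0_def by force
    have S0E: "\<exists>e. (c,e) \<in> S \<and> e' = 0" if "(c,e') \<in> S0" for c e' using that unfolding S0_def by force
    have pos: "maff S0 d > 0" if "d \<in> span C" "d \<noteq> 0" for d
    proof (rule ccontr)
      assume "\<not> maff S0 d > 0"
      then have "c \<bullet> d \<le> 0" if "(c,e) \<in> S" for c e using maff_ge[OF finS0(1) S0I[OF that], of d] by simp
      then have "c \<bullet> d = 0" if "(c,e) \<in> S" for c e using nod that by blast
      then have "orthogonal d y" if "y \<in> C" for y using that unfolding C_def orthogonal_def
        by (auto simp: inner_commute)
      then have "orthogonal d d" using orthogonal_to_span \<open>d \<in> span C\<close> by blast
      then show False using \<open>d \<noteq> 0\<close> by (simp add: orthogonal_def)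
    qed
    define K where "K = sphere (0::'a) 1 \<inter> span C"
    have cK: "compact K" unfolding K_def by (intro compact_Int_closed) auto
    obtain \<kappa> where \<kappa>pos: "\<kappa> > 0" and \<kappa>le: "\<And>w. w \<in> K \<Longrightarrow> \<kappa> \<le> maff S0 w"
    proof (cases "K = {}")
      case True then show ?thesis using that[of 1] by auto
    next
      case False
      then obtain w0 where "w0 \<in> K" "\<forall>y\<in>K. maff S0 w0 \<le> maff S0 y"
        using continuous_attains_inf[OF cK False maff_cont[OF finS0]] by blast
      moreover have "w0 \<in> span C" "w0 \<noteq> 0" using \<open>w0 \<in> K\<close> unfolding K_def by auto
      then have "maff S0 w0 > 0" using pos by blast
      ultimately show ?thesis using that[of "maff S0 w0"] by auto
    qed
    have lowb: "\<kappa> * norm v \<le> maff S0 v" if "v \<in> span C" for v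
    proof (cases "v = 0")
      case True
      obtain c e where "(c,e) \<in> S0" "maff S0 v = c \<bullet> v + e" using maff_in[OF finS0] by blast
      then have "e = 0" using S0E by blast
      then show ?thesis using True \<open>maff S0 v = c \<bullet> v + e\<close> by simp
    next
      case False
      define w where "w = (1 / norm v) *\<^sub>R v"
      have "w \<in> K" unfolding K_def w_def using False that by (auto intro: span_mul)
      obtain c e where ce: "(c,e) \<in> S0" "maff S0 w = c \<bullet> w + e" using maff_in[OF finS0] by blast
      have e0: "e = 0" using S0E[OF ce(1)] by auto
      have "\<kappa> \<le> c \<bullet> w" using \<kappa>le[OF \<open>w \<in> K\<close>] ce e0 by simp
      then have "\<kappa> * norm v \<le> (c \<bullet> w) * norm v" by (simp add: mult_right_mono)
      also have "(c \<bullet> w) * norm v = c \<bullet> v" unfolding w_def using False by simp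
      also have "\<dots> \<le> maff S0 v" using maff_ge[OF finS0(1) ce(1), of v] e0 by simp
      finally show ?thesis .
    qed
    define emin where "emin = Min (snd ` S)"
    have emin: "emin \<le> e" if "(c,e) \<in> S" for c e
      unfolding emin_def using fin that by (intro Min_le) force+
    have low: "\<kappa> * norm v + emin \<le> maff S v" if "v \<in> span C" for v
    proof -
      obtain c e where ce: "(c,e) \<in> S0" "maff S0 v = c \<bullet> v + e" using maff_in[OF finS0] by blast
      obtain e' where "(c,e') \<in> S" "e = 0" using S0E[OF ce(1)] by blast
      then have "c \<bullet> v + emin \<le> maff S v" using maff_ge[OF fin, of c e' v] emin by force
      then show ?thesis using lowb[OF that] ce \<open>e = 0\<close> by simp
    qed
    have decomp: "\<exists>y w. y \<in> span C \<and> u = y + w \<and> (\<forall>x. maff S (x + w) = maff S x)" for u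
    proof -
      obtain y w where yw: "y \<in> span C" "\<And>x. x \<in> span C \<Longrightarrow> orthogonal w x" "u = y + w"
        using orthogonal_subspace_decomp_exists[of C u] by blast
      have "c \<bullet> w = 0" if "(c,e) \<in> S" for c e
      proof -
        have "c \<in> C" unfolding C_def using that by force
        then have "c \<in> span C" by (rule span_base)
        then have "orthogonal w c" by (rule yw(2))
        then show ?thesis by (simp add: orthogonal_def inner_commute)
      qed
      then have "maff S (x + w) = maff S x" for x by (rule maff_orth)
      then show ?thesis using yw by blast
    qed
    define R where "R = (maff S 0 - emin) / \<kappa>"
    have "emin \<le> maff S 0" using low[of 0] by (simp add: span_zero)
    then have R0: "R \<ge> 0" unfolding R_def using \<kappa>pos by simp
    define Kb where "Kb = cball (0::'a) R \<inter> span C"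
    have "0 \<in> Kb" unfolding Kb_def using R0 by (simp add: span_zero)
    then have "Kb \<noteq> {}" by blast
    have "compact Kb" unfolding Kb_def by (intro compact_Int_closed) auto
    note \<open>compact Kb\<close> \<open>Kb \<noteq> {}\<close>
    then obtain z where zK: "z \<in> Kb" and zmin: "\<forall>y\<in>Kb. maff S z \<le> maff S y"
      using continuous_attains_inf[OF _ _ maff_cont[OF fin ne]] by blast
    have zmin': "maff S z \<le> maff S u" for u
    proof -
      obtain y w where yw: "y \<in> span C" "u = y + w" "\<forall>x. maff S (x + w) = maff S x"
        using decomp by blast
      have "maff S z \<le> maff S y"
      proof (cases "norm y \<le> R")
        case True then show ?thesis using zmin yw(1) unfolding Kb_def by auto
      next
        case False
        then have "\<kappa> * R < \<kappa> * norm y" using \<kappa>pos by simp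
        then have "maff S 0 < maff S y" using low[OF yw(1)] \<kappa>pos unfolding R_def by simp
        moreover have "0 \<in> Kb" unfolding Kb_def using R0 by (simp add: span_zero)
        ultimately show ?thesis using zmin by fastforce
      qed
      then show ?thesis using yw by simp
    qed
    define m where "m = maff S z"
    have "\<exists>\<delta>>0. \<forall>u. maff S u < m + \<delta> \<longrightarrow> (\<exists>z'. maff S z' = m \<and> dist u z' < \<epsilon>)"
      if \<epsilon>: "\<epsilon> > 0" for \<epsilon>
    proof -
      define R' where "R' = (m + 1 - emin) / \<kappa>"
      define T where "T = cball (0::'a) R' \<inter> span C \<inter> (\<Inter>z'\<in>{z'. maff S z' = m}. - ball z' \<epsilon>)"
      have cT: "compact T" unfolding T_def
        by (intro compact_Int_closed closed_INT) (auto intro: closed_Compl)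
      obtain \<delta> where \<delta>pos: "\<delta> > 0" and \<delta>1: "\<delta> \<le> 1" and \<delta>T: "\<And>y. y \<in> T \<Longrightarrow> m + \<delta> \<le> maff S y"
      proof (cases "T = {}")
        case True then show ?thesis using that[of 1] by auto
      next
        case False
        then obtain t0 where t0: "t0 \<in> T" "\<forall>y\<in>T. maff S t0 \<le> maff S y"
          using continuous_attains_inf[OF cT False maff_cont[OF fin ne]] by blast
        have "maff S t0 \<noteq> m"
        proof
          assume "maff S t0 = m"
          then have "t0 \<notin> ball t0 \<epsilon>" using t0(1) unfolding T_def by blast
          then show False using \<epsilon> by simp
        qed
        then have "maff S t0 > m" using zmin'[of t0] unfolding m_def by simp
        then show ?thesis using that[of "min 1 (maff S t0 - m)"] t0(2) by fastforce
      qed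
      have "\<exists>z'. maff S z' = m \<and> dist u z' < \<epsilon>" if u: "maff S u < m + \<delta>" for u
      proof -
        obtain y w where yw: "y \<in> span C" "u = y + w" "\<forall>x. maff S (x + w) = maff S x"
          using decomp by blast
        have my: "maff S y < m + \<delta>" using u yw by simp
        then have "\<kappa> * norm y < m + 1 - emin" using low[OF yw(1)] \<delta>1 by linarith
        then have "norm y \<le> R'" unfolding R'_def using \<kappa>pos by (simp add: pos_le_divide_eq mult.commute)
        moreover have "y \<notin> T" using \<delta>T my by fastforce
        ultimately obtain z' where z': "maff S z' = m" "y \<in> ball z' \<epsilon>"
          using yw(1) unfolding T_def by auto
        have "maff S (z' + w) = m" using yw(3) z'(1) by simp
        moreover have "dist u (z' + w) = dist y z'" using yw(2) by (simp add: dist_norm algebra_simps)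
        ultimately show ?thesis using z'(2) by (metis dist_commute mem_ball)
      qed
      then show ?thesis using \<delta>pos by blast
    qed
    then show ?thesis using zmin' unfolding m_def by blast
  qed
qed




lemma norm_sum_le:
  assumes "is_norm N" "finite A"
  shows "N (sum f A) \<le> (\<Sum>i\<in>A. N (f i))"
  using assms(2)
proof (induction A rule: finite_induct)
  case empty
  have "N 0 = 0" using assms(1) unfolding is_norm_def by blast
  then show ?case by simp
next
  case (insert x F)
  have "N (sum f (insert x F)) = N (f x + sum f F)" using insert by simp
  also have "\<dots> \<le> N (f x) + N (sum f F)" using assms(1) unfolding is_norm_def by blast
  finally show ?case using insert by simp
qed

lemma norm_upper:
  fixes N :: "'a::euclidean_space \<Rightarrow> real"
  assumes "is_norm N"
  shows "\<exists>C>0. \<forall>x. N x \<le> C * norm x"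
proof -
  define C where "C = 1 + (\<Sum>b\<in>Basis. N b)"
  have Nb: "0 \<le> N b" for b using assms unfolding is_norm_def by blast
  have hom: "N (c *\<^sub>R y) = \<bar>c\<bar> * N y" for c y using assms unfolding is_norm_def by blast
  have "0 \<le> (\<Sum>b\<in>Basis. N b)" using Nb by (simp add: sum_nonneg)
  then have C0: "C > 0" unfolding C_def by linarith
  have "N x \<le> C * norm x" for x
  proof -
    have "N x = N (\<Sum>b\<in>Basis. (x \<bullet> b) *\<^sub>R b)" by (simp only: euclidean_representation)
    also have "\<dots> \<le> (\<Sum>b\<in>Basis. N ((x \<bullet> b) *\<^sub>R b))" by (rule norm_sum_le[OF assms finite_Basis])
    also have "\<dots> = (\<Sum>b\<in>Basis. \<bar>x \<bullet> b\<bar> * N b)"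
      using hom by (intro sum.cong) auto
    also have "\<dots> \<le> (\<Sum>b\<in>Basis. norm x * N b)"
      by (rule sum_mono, rule mult_right_mono, erule Basis_le_norm, rule Nb)
    also have "\<dots> = norm x * (\<Sum>b\<in>Basis. N b)" by (simp add: sum_distrib_left)
    also have "\<dots> \<le> C * norm x" unfolding C_def by (simp add: algebra_simps)
    finally show ?thesis .
  qed
  then show ?thesis using C0 by blast
qed

lemma norm_lower:
  fixes N :: "'a::euclidean_space \<Rightarrow> real"
  assumes "is_norm N"
  shows "\<exists>c>0. \<forall>x. c * norm x \<le> N x"
proof -
  obtain C where C: "C > 0" "\<And>x. N x \<le> C * norm x" using norm_upper[OF assms] by blast
  have tri: "N (x + y) \<le> N x + N y" for x y using assms unfolding is_norm_def by blast
  have hom: "N (c *\<^sub>R y) = \<bar>c\<bar> * N y" for c y using assms unfolding is_norm_def by blast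
  have neg: "N (- x) = N x" for x using hom[of "-1" x] by simp
  have "\<bar>N x - N y\<bar> \<le> C * dist x y" for x y
  proof -
    have "N x \<le> N y + N (x - y)" using tri[of y "x - y"] by simp
    moreover have "N y \<le> N x + N (x - y)" using tri[of x "y - x"] neg[of "x - y"] by simp
    moreover have "N (x - y) \<le> C * dist x y" using C(2) by (simp add: dist_norm)
    ultimately show ?thesis by linarith
  qed
  then have cont: "continuous_on A N" for A
    using C(1) by (intro lipschitz_on_continuous_on[of C] lipschitz_onI) (auto simp: dist_real_def)
  obtain b :: 'a where b: "b \<in> Basis" using nonempty_Basis by blast
  have "b \<in> sphere (0::'a) 1" using b by simp
  then have "sphere (0::'a) 1 \<noteq> {}" by blast
  then obtain x0 where x0: "x0 \<in> sphere 0 1" "\<forall>y\<in>sphere 0 1. N x0 \<le> N y"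
    using continuous_attains_inf[OF compact_sphere _ cont] by blast
  have "x0 \<noteq> 0" using x0 by auto
  have "N x0 \<noteq> 0" "N x0 \<ge> 0" using assms \<open>x0 \<noteq> 0\<close> unfolding is_norm_def by blast+
  then have c0: "N x0 > 0" by linarith
  have "N x0 * norm x \<le> N x" for x
  proof (cases "x = 0")
    case True
    have "N 0 = 0" using assms unfolding is_norm_def by blast
    then show ?thesis using True by simp
  next
    case False
    have "(1 / norm x) *\<^sub>R x \<in> sphere 0 1" using False by simp
    then have "N x0 \<le> N ((1 / norm x) *\<^sub>R x)" using x0 by blast
    also have "\<dots> = N x / norm x" using hom[of "1 / norm x" x] by simp
    finally show ?thesis using False by (simp add: pos_le_divide_eq)
  qed
  then show ?thesis using c0 by blast
qed




lemma poly_choose: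
  assumes "polyhedral_loss (L :: real^'d \<Rightarrow> 'y \<Rightarrow> real)"
  shows "\<exists>Sy. \<forall>y. finite (Sy y) \<and> Sy y \<noteq> {} \<and> (\<forall>u. L u y = maff (Sy y) u)"
  using assms unfolding polyhedral_loss_def maff_def by (intro choice) blast

lemma lin_sel:
  fixes p :: "'y::finite \<Rightarrow> real" and \<sigma> :: "'y \<Rightarrow> ('a::euclidean_space \<times> real)"
  shows "(\<Sum>y\<in>UNIV. p y *\<^sub>R fst (\<sigma> y)) \<bullet> u + (\<Sum>y\<in>UNIV. p y * snd (\<sigma> y))
       = (\<Sum>y\<in>UNIV. p y * (fst (\<sigma> y) \<bullet> u + snd (\<sigma> y)))"
  by (simp add: inner_sum_left sum.distrib algebra_simps)

lemma expected_maff: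
  fixes L :: "'a::euclidean_space \<Rightarrow> 'y::finite \<Rightarrow> real"
  assumes Sy: "\<And>y. finite (Sy y)" "\<And>y. Sy y \<noteq> {}" "\<And>u y. L u y = maff (Sy y) u"
    and p: "\<And>y. 0 \<le> p y"
  shows "\<exists>S. finite S \<and> S \<noteq> {} \<and> (\<forall>u. expected p (L u) = maff S u)"
proof -
  define Sel where "Sel = PiE UNIV Sy"
  define S where "S = (\<lambda>\<sigma>. (\<Sum>y\<in>UNIV. p y *\<^sub>R fst (\<sigma> y), \<Sum>y\<in>UNIV. p y * snd (\<sigma> y))) ` Sel"
  have finSel: "finite Sel" unfolding Sel_def using Sy(1) by (intro finite_PiE) auto
  have neSel: "Sel \<noteq> {}" unfolding Sel_def using Sy(2) by (simp add: PiE_eq_empty_iff)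
  have finS: "finite S" "S \<noteq> {}" unfolding S_def using finSel neSel by auto
  have "expected p (L u) = maff S u" for u
  proof (rule antisym)
    have "\<forall>y. \<exists>ce. ce \<in> Sy y \<and> maff (Sy y) u = fst ce \<bullet> u + snd ce"
      using maff_in[OF Sy(1,2)] by fastforce
    then obtain \<sigma> where \<sigma>: "\<And>y. \<sigma> y \<in> Sy y \<and> maff (Sy y) u = fst (\<sigma> y) \<bullet> u + snd (\<sigma> y)"
      by metis
    have "\<sigma> \<in> Sel" unfolding Sel_def using \<sigma> by auto
    then have mem: "(\<Sum>y\<in>UNIV. p y *\<^sub>R fst (\<sigma> y), \<Sum>y\<in>UNIV. p y * snd (\<sigma> y)) \<in> S"
      unfolding S_def by blast
    have "expected p (L u) = (\<Sum>y\<in>UNIV. p y * (fst (\<sigma> y) \<bullet> u + snd (\<sigma> y)))"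
      unfolding expected_def using \<sigma> Sy(3) by simp
    also have "\<dots> \<le> maff S u" using maff_ge[OF finS(1) mem, of u] lin_sel[of p \<sigma> u] by simp
    finally show "expected p (L u) \<le> maff S u" .
  next
    show "maff S u \<le> expected p (L u)"
    proof (rule maff_le[OF finS])
      fix c e assume "(c,e) \<in> S"
      then obtain \<sigma> where \<sigma>: "\<sigma> \<in> Sel" "c = (\<Sum>y\<in>UNIV. p y *\<^sub>R fst (\<sigma> y))"
        "e = (\<Sum>y\<in>UNIV. p y * snd (\<sigma> y))" unfolding S_def by blast
      have "c \<bullet> u + e = (\<Sum>y\<in>UNIV. p y * (fst (\<sigma> y) \<bullet> u + snd (\<sigma> y)))"
        using \<sigma> lin_sel by simp
      also have "\<dots> \<le> (\<Sum>y\<in>UNIV. p y * L u y)"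
      proof (rule sum_mono, rule mult_left_mono)
        fix y
        have "\<sigma> y \<in> Sy y" using \<sigma>(1) unfolding Sel_def by auto
        then show "fst (\<sigma> y) \<bullet> u + snd (\<sigma> y) \<le> L u y"
          using maff_ge[OF Sy(1), of "fst (\<sigma> y)" "snd (\<sigma> y)"] Sy(3) by simp
      qed (rule p)
      finally show "c \<bullet> u + e \<le> expected p (L u)" unfolding expected_def .
    qed
  qed
  then show ?thesis using finS by blast
qed

lemma loss_lip:
  fixes L :: "'a::euclidean_space \<Rightarrow> 'y::finite \<Rightarrow> real"
  assumes Sy: "\<And>y. finite (Sy y)" "\<And>y. Sy y \<noteq> {}" "\<And>u y. L u y = maff (Sy y) u"
  shows "\<exists>K>0. \<forall>q\<in>prob_simplex. \<forall>u w. expected q (L u) \<le> expected q (L w) + K * norm (u - w)"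
proof -
  define K where "K = 1 + (\<Sum>y\<in>UNIV. Max ((\<lambda>(c,e). norm c) ` Sy y))"
  have Ky: "norm c \<le> Max ((\<lambda>(c,e). norm c) ` Sy y)" if "(c,e) \<in> Sy y" for c e y
    using Sy(1) that by (intro Max_ge) force+
  have My0: "0 \<le> Max ((\<lambda>(c,e). norm c) ` Sy y)" for y
  proof -
    obtain c e where "(c,e) \<in> Sy y" using Sy(2) by fastforce
    then show ?thesis using Ky[of c e y] norm_ge_zero[of c] by linarith
  qed
  have KM: "Max ((\<lambda>(c,e). norm c) ` Sy y) \<le> K" for y
  proof -
    have "Max ((\<lambda>(c,e). norm c) ` Sy y) \<le> (\<Sum>y\<in>UNIV. Max ((\<lambda>(c,e). norm c) ` Sy y))"
      using My0 by (intro member_le_sum) auto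
    then show ?thesis unfolding K_def by linarith
  qed
  have K0: "K > 0" unfolding K_def using My0 by (smt (verit) sum_nonneg)
  have Ly: "L u y \<le> L w y + K * norm (u - w)" for u w y
  proof -
    have "norm c \<le> K" if "(c,e) \<in> Sy y" for c e using Ky[OF that] KM[of y] by linarith
    then show ?thesis using maff_lip[OF Sy(1,2)] Sy(3) by metis
  qed
  have "expected q (L u) \<le> expected q (L w) + K * norm (u - w)" if q: "q \<in> prob_simplex" for q u w
  proof -
    have q0: "\<And>y. 0 \<le> q y" and q1: "sum q UNIV = 1" using q unfolding prob_simplex_def by auto
    have "expected q (L u) \<le> (\<Sum>y\<in>UNIV. q y * (L w y + K * norm (u - w)))"
      unfolding expected_def by (intro sum_mono mult_left_mono Ly q0)
    also have "\<dots> = expected q (L w) + (\<Sum>y\<in>UNIV. q y) * (K * norm (u - w))"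
      unfolding expected_def by (simp add: distrib_left sum.distrib sum_distrib_right)
    finally show ?thesis using q1 by simp
  qed
  then show ?thesis using K0 by blast
qed

lemma finite_cells_aux:
  fixes L :: "'a::euclidean_space \<Rightarrow> 'y::finite \<Rightarrow> real"
  assumes Sy: "\<And>y. finite (Sy y)" "\<And>y. Sy y \<noteq> {}" "\<And>u y. L u y = maff (Sy y) u"
  shows "finite (cells L)"
proof -
  define Sel where "Sel = PiE UNIV Sy"
  have finSel: "finite Sel" unfolding Sel_def using Sy(1) by (intro finite_PiE) auto
  define R where "R \<sigma> = {u. \<forall>y a b. (a,b) \<in> Sy y \<longrightarrow> a \<bullet> u + b \<le> fst (\<sigma> y) \<bullet> u + snd (\<sigma> y)}" for \<sigma>
  have polyR: "polyhedron (R \<sigma>)" for \<sigma>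
  proof -
    define H where "H = (\<lambda>x. {u. (fst (snd x) - fst (\<sigma> (fst x))) \<bullet> u \<le> snd (\<sigma> (fst x)) - snd (snd x)})"
    define F where "F = H ` (SIGMA y:UNIV. Sy y)"
    have "finite F" unfolding F_def using Sy(1) by auto
    moreover have "polyhedron S" if "S \<in> F" for S
      using that unfolding F_def H_def by (auto intro: polyhedron_halfspace_le)
    moreover have "R \<sigma> = \<Inter>F"
    proof (intro set_eqI iffI)
      fix u assume u: "u \<in> R \<sigma>"
      show "u \<in> \<Inter>F"
      proof
        fix S assume "S \<in> F"
        then obtain y a b where ab: "(a,b) \<in> Sy y" "S = H (y,(a,b))" unfolding F_def by auto
        have "a \<bullet> u + b \<le> fst (\<sigma> y) \<bullet> u + snd (\<sigma> y)" using u ab(1) unfolding R_def by blast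
        then show "u \<in> S" unfolding ab(2) H_def by (simp add: inner_diff_left)
      qed
    next
      fix u assume u: "u \<in> \<Inter>F"
      have "a \<bullet> u + b \<le> fst (\<sigma> y) \<bullet> u + snd (\<sigma> y)" if "(a,b) \<in> Sy y" for y a b
      proof -
        have "H (y,(a,b)) \<in> F" unfolding F_def using that by auto
        then have "u \<in> H (y,(a,b))" using u by blast
        then show ?thesis unfolding H_def by (simp add: inner_diff_left)
      qed
      then show "u \<in> R \<sigma>" unfolding R_def by blast
    qed
    ultimately show ?thesis by auto
  qed
  have onR: "L u y = fst (\<sigma> y) \<bullet> u + snd (\<sigma> y)" if "\<sigma> \<in> Sel" "u \<in> R \<sigma>" for \<sigma> u y
  proof (rule antisym)
    show "L u y \<le> fst (\<sigma> y) \<bullet> u + snd (\<sigma> y)"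
      unfolding Sy(3) using that(2) unfolding R_def by (intro maff_le[OF Sy(1,2)]) auto
    have "\<sigma> y \<in> Sy y" using that(1) unfolding Sel_def by auto
    then show "fst (\<sigma> y) \<bullet> u + snd (\<sigma> y) \<le> L u y"
      unfolding Sy(3) using maff_ge[OF Sy(1), of "fst (\<sigma> y)" "snd (\<sigma> y)" y u] by simp
  qed
  have cover: "\<exists>\<sigma>\<in>Sel. u \<in> R \<sigma>" for u
  proof -
    have "\<forall>y. \<exists>ce. ce \<in> Sy y \<and> maff (Sy y) u = fst ce \<bullet> u + snd ce"
      using maff_in[OF Sy(1,2)] by fastforce
    then obtain \<sigma> where \<sigma>: "\<And>y. \<sigma> y \<in> Sy y \<and> maff (Sy y) u = fst (\<sigma> y) \<bullet> u + snd (\<sigma> y)"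
      by metis
    have "\<sigma> \<in> Sel" unfolding Sel_def using \<sigma> by auto
    moreover have "u \<in> R \<sigma>"
    proof -
      have "a \<bullet> u + b \<le> fst (\<sigma> y) \<bullet> u + snd (\<sigma> y)" if "(a,b) \<in> Sy y" for y a b
        using \<sigma>[of y] maff_ge[OF Sy(1) that, of u] by simp
      then show ?thesis unfolding R_def by blast
    qed
    ultimately show ?thesis by blast
  qed
  have face: "prop_of L p \<inter> R \<sigma> face_of R \<sigma>" if "\<sigma> \<in> Sel" for p \<sigma>
  proof (cases "prop_of L p = {}")
    case True then show ?thesis by simp
  next
    case False
    then obtain z where z: "z \<in> prop_of L p" by blast
    define m where "m = expected p (L z)"
    have zmin: "m \<le> expected p (L u)" for u using z unfolding prop_of_def m_def by blast
    have pm: "u \<in> prop_of L p \<longleftrightarrow> expected p (L u) = m" for u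
      using z zmin unfolding prop_of_def m_def by (auto intro: antisym)
    define c where "c = (\<Sum>y\<in>UNIV. p y *\<^sub>R fst (\<sigma> y))"
    define d where "d = (\<Sum>y\<in>UNIV. p y * snd (\<sigma> y))"
    have eR: "expected p (L u) = c \<bullet> u + d" if "u \<in> R \<sigma>" for u
      unfolding expected_def c_def d_def lin_sel using onR[OF \<open>\<sigma> \<in> Sel\<close> that] by simp
    have "R \<sigma> \<inter> {u. (- c) \<bullet> u = d - m} face_of R \<sigma>"
    proof (rule face_of_Int_supporting_hyperplane_le)
      show "convex (R \<sigma>)" using polyR by (rule polyhedron_imp_convex)
      fix u assume "u \<in> R \<sigma>"
      then show "(- c) \<bullet> u \<le> d - m" using eR zmin[of u] by simp
    qed
    moreover have "prop_of L p \<inter> R \<sigma> = R \<sigma> \<inter> {u. (- c) \<bullet> u = d - m}"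
      using pm eR by auto
    ultimately show ?thesis by simp
  qed
  define G where "G = (\<lambda>F. \<Union>\<sigma>\<in>Sel. F \<sigma>) ` (PiE Sel (\<lambda>\<sigma>. {F. F face_of R \<sigma>}))"
  have "finite G" unfolding G_def using finSel finite_polyhedron_faces[OF polyR]
    by (intro finite_imageI finite_PiE) auto
  moreover have "cells L \<subseteq> G"
  proof
    fix U assume "U \<in> cells L"
    then obtain p where U: "U = prop_of L p" unfolding cells_def by blast
    define F where "F = restrict (\<lambda>\<sigma>. prop_of L p \<inter> R \<sigma>) Sel"
    have "F \<in> PiE Sel (\<lambda>\<sigma>. {F. F face_of R \<sigma>})" unfolding F_def using face by auto
    moreover have "U = (\<Union>\<sigma>\<in>Sel. F \<sigma>)" unfolding F_def U using cover by auto
    ultimately show "U \<in> G" unfolding G_def by blast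
  qed
  ultimately show ?thesis by (rule finite_subset[rotated])
qed




lemma INF_min_ereal:
  assumes "\<And>u. f z \<le> f u"
  shows "(INF u. ereal (f u)) = ereal (f z)"
proof (rule antisym)
  show "(INF u. ereal (f u)) \<le> ereal (f z)" by (rule INF_lower) simp
  show "ereal (f z) \<le> (INF u. ereal (f u))" by (rule INF_greatest) (simp add: assms)
qed

lemma ereal_gap:
  assumes "ereal x < a"
  shows "\<exists>\<delta>>0. ereal (x + \<delta>) \<le> a"
proof (cases a)
  case (real r)
  then show ?thesis using assms by (intro exI[of _ "r - x"]) auto
next
  case PInf
  then show ?thesis by (intro exI[of _ 1]) auto
next
  case MInf
  then show ?thesis using assms by simp
qed

lemma thick_PsiD:
  assumes "r \<in> thick_Psi L \<gamma> \<epsilon> N u" "U \<in> cells L" "(INF us\<in>U. ereal (N (us - u))) < ereal \<epsilon>"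
  shows "r \<in> cell_reports L \<gamma> U"
proof -
  have "cell_reports L \<gamma> U \<in> {cell_reports L \<gamma> U | U. U \<in> cells L \<and> (INF us\<in>U. ereal (N (us - u))) < ereal \<epsilon>}"
    using assms(2,3) by blast
  moreover have "r \<in> \<Inter>{cell_reports L \<gamma> U | U. U \<in> cells L \<and> (INF us\<in>U. ereal (N (us - u))) < ereal \<epsilon>}"
    using assms(1) unfolding thick_Psi_def by simp
  ultimately show ?thesis by (rule InterD[rotated])
qed

lemma thick_PsiI:
  assumes "\<And>U. U \<in> cells L \<Longrightarrow> (INF us\<in>U. ereal (N (us - u))) < ereal \<epsilon> \<Longrightarrow> r \<in> cell_reports L \<gamma> U"
  shows "r \<in> thick_Psi L \<gamma> \<epsilon> N u"
  unfolding thick_Psi_def using assms by blast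

theorem theorem9:
  fixes L :: "real^'d \<Rightarrow> 'y::finite \<Rightarrow> real"
    and l :: "'r::finite \<Rightarrow> 'y \<Rightarrow> real"
    and N :: "real^'d \<Rightarrow> real"
    and \<psi> :: "real^'d \<Rightarrow> 'r"
  assumes "polyhedral_loss L"
    and "discrete_loss l"
    and "is_norm N"
  shows "calibrated L \<psi> l \<longleftrightarrow>
         (\<exists>\<epsilon>>0. produced_by_thickened_link L (prop_of l) \<epsilon> N \<psi>)"
proof -
  obtain Sy where Sy0: "\<forall>y. finite (Sy y) \<and> Sy y \<noteq> {} \<and> (\<forall>u. L u y = maff (Sy y) u)"
    using poly_choose[OF assms(1)] by (elim exE)
  have Sy: "\<And>y. finite (Sy y)" "\<And>y. Sy y \<noteq> {}" "\<And>u y. L u y = maff (Sy y) u"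
    using Sy0 by simp_all
  have "nonneg_loss L" using assms(1) unfolding polyhedral_loss_def by (rule conjunct1)
  then have Lnn: "0 \<le> L u y" for u y unfolding nonneg_loss_def by blast
  have fincells: "finite (cells L)" by (rule finite_cells_aux[of Sy L, OF Sy])
  obtain K where K: "K > 0" "\<And>q u w. q \<in> prob_simplex \<Longrightarrow> expected q (L u) \<le> expected q (L w) + K * norm (u - w)"
    using loss_lip[of Sy L, OF Sy] by blast
  obtain Cn where Cn: "Cn > 0" "\<And>x. N x \<le> Cn * norm x" using norm_upper[OF assms(3)] by blast
  obtain cn where cn: "cn > 0" "\<And>x. cn * norm x \<le> N x" using norm_lower[OF assms(3)] by blast
  have minex: "\<exists>z. (\<forall>u. expected p (L z) \<le> expected p (L u)) \<and>
    (\<forall>\<epsilon>>0. \<exists>\<delta>>0. \<forall>u. expected p (L u) < expected p (L z) + \<delta> \<longrightarrow>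
        (\<exists>z'. expected p (L z') = expected p (L z) \<and> dist u z' < \<epsilon>))"
    if p: "p \<in> prob_simplex" for p
  proof -
    have p0: "\<And>y. 0 \<le> p y" using p unfolding prob_simplex_def by simp
    have "\<exists>S. finite S \<and> S \<noteq> {} \<and> (\<forall>u. expected p (L u) = maff S u)"
      by (rule expected_maff[where Sy=Sy and L=L and p=p, OF Sy p0])
    then obtain S where S0: "finite S \<and> S \<noteq> {} \<and> (\<forall>u. expected p (L u) = maff S u)"
      by (elim exE)
    have S: "finite S" "S \<noteq> {}" "\<And>u. expected p (L u) = maff S u" using S0 by simp_all
    have "0 \<le> maff S u" for u
      unfolding S(3)[symmetric] expected_def using p0 Lnn by (intro sum_nonneg mult_nonneg_nonneg)
    from maff_main[OF S(1,2) this] show ?thesis unfolding S(3)[symmetric] .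
  qed
  show ?thesis
  proof
    assume cal: "calibrated L \<psi> l"
    have eta: "\<exists>\<eta>>0. \<forall>u us. \<psi> u \<notin> prop_of l q \<longrightarrow> us \<in> prop_of L q \<longrightarrow> \<eta> \<le> N (us - u)"
      if q: "q \<in> prob_simplex" for q
    proof (cases "prop_of L q = {}")
      case True then show ?thesis by (intro exI[of _ 1]) auto
    next
      case False
      then obtain z where z: "z \<in> prop_of L q" by blast
      have zmin: "\<And>u. expected q (L z) \<le> expected q (L u)" using z unfolding prop_of_def by blast
      have "(INF u\<in>{u. \<psi> u \<notin> prop_of l q}. ereal (expected q (L u))) > ereal (expected q (L z))"
        using cal q INF_min_ereal[of "\<lambda>u. expected q (L u)" z, OF zmin] unfolding calibrated_def by auto
      then obtain \<delta> where \<delta>: "\<delta> > 0"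
        "ereal (expected q (L z) + \<delta>) \<le> (INF u\<in>{u. \<psi> u \<notin> prop_of l q}. ereal (expected q (L u)))"
        using ereal_gap by blast
      have "\<delta> * cn / K \<le> N (us - u)" if u: "\<psi> u \<notin> prop_of l q" and us: "us \<in> prop_of L q" for u us
      proof -
        have "ereal (expected q (L z) + \<delta>) \<le> ereal (expected q (L u))"
        proof -
          have "(INF u\<in>{u. \<psi> u \<notin> prop_of l q}. ereal (expected q (L u))) \<le> ereal (expected q (L u))"
            by (rule INF_lower) (simp add: u)
          then show ?thesis using \<delta>(2) by (rule order.trans[rotated])
        qed
        then have a: "expected q (L z) + \<delta> \<le> expected q (L u)" by simp
        have "expected q (L us) \<le> expected q (L z)" using us unfolding prop_of_def by blast
        then have "\<delta> \<le> K * norm (u - us)" using a K(2)[OF q, of u us] by linarith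
        also have "norm (u - us) = norm (us - u)" by (rule norm_minus_commute)
        also have "K * norm (us - u) \<le> K * (N (us - u) / cn)"
          using cn K(1) by (intro mult_left_mono) (auto simp: pos_le_divide_eq mult.commute)
        finally have "\<delta> \<le> K * (N (us - u) / cn)" .
        then show ?thesis using K(1) cn(1) by (simp add: field_simps)
      qed
      moreover have "\<delta> * cn / K > 0" using \<delta>(1) cn(1) K(1) by simp
      ultimately show ?thesis by blast
    qed
    then have hch: "\<forall>q. \<exists>\<eta>. q \<in> prob_simplex \<longrightarrow> \<eta> > 0 \<and> (\<forall>u us. \<psi> u \<notin> prop_of l q \<longrightarrow> us \<in> prop_of L q \<longrightarrow> \<eta> \<le> N (us - u))"
      by blast
    obtain \<eta>f where \<eta>f0: "\<forall>q. q \<in> prob_simplex \<longrightarrow> \<eta>f q > 0 \<and> (\<forall>u us. \<psi> u \<notin> prop_of l q \<longrightarrow> us \<in> prop_of L q \<longrightarrow> \<eta>f q \<le> N (us - u))"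
      using choice[OF hch] by blast
    have \<eta>f: "\<And>q. q \<in> prob_simplex \<Longrightarrow> \<eta>f q > 0"
      "\<And>q u us. q \<in> prob_simplex \<Longrightarrow> \<psi> u \<notin> prop_of l q \<Longrightarrow> us \<in> prop_of L q \<Longrightarrow> \<eta>f q \<le> N (us - u)"
      using \<eta>f0 by blast+
    define BP where "BP = {(U, r). U \<in> cells L \<and> (\<exists>q\<in>prob_simplex. prop_of L q = U \<and> r \<notin> prop_of l q)}"
    define qf where "qf x = (SOME q. q \<in> prob_simplex \<and> prop_of L q = fst x \<and> snd x \<notin> prop_of l q)" for x
    have qf: "qf (U,r) \<in> prob_simplex \<and> prop_of L (qf (U,r)) = U \<and> r \<notin> prop_of l (qf (U,r))"
      if "(U,r) \<in> BP" for U r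
    proof -
      have "\<exists>q. q \<in> prob_simplex \<and> prop_of L q = U \<and> r \<notin> prop_of l q" using that unfolding BP_def by blast
      then show ?thesis unfolding qf_def fst_conv snd_conv by (rule someI_ex)
    qed
    have finBP: "finite BP"
      by (rule finite_subset[of _ "cells L \<times> UNIV"]) (auto simp: BP_def fincells)
    define \<epsilon> where "\<epsilon> = Min (insert 1 ((\<lambda>x. \<eta>f (qf x)) ` BP))"
    have \<epsilon>pos: "\<epsilon> > 0" unfolding \<epsilon>_def using finBP
      by (subst Min_gr_iff) (auto intro!: \<eta>f(1) dest!: qf[THEN conjunct1])
    have \<epsilon>le: "\<epsilon> \<le> \<eta>f (qf x)" if "x \<in> BP" for x
      unfolding \<epsilon>_def using finBP that by (intro Min_le) auto
    have inPsi: "\<psi> u \<in> thick_Psi L (prop_of l) \<epsilon> N u" for u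
    proof -
      have "\<psi> u \<in> cell_reports L (prop_of l) U"
        if U: "U \<in> cells L" "(INF us\<in>U. ereal (N (us - u))) < ereal \<epsilon>" for U
      proof -
        obtain us where us: "us \<in> U" "N (us - u) < \<epsilon>" using U(2) by (auto simp: INF_less_iff)
        have "\<psi> u \<in> prop_of l p" if p: "p \<in> cell_region L U" for p
        proof (rule ccontr)
          assume bad: "\<psi> u \<notin> prop_of l p"
          have "(U, \<psi> u) \<in> BP" unfolding BP_def using U(1) p bad unfolding cell_region_def by blast
          note q = qf[OF this]
          have "\<eta>f (qf (U, \<psi> u)) \<le> N (us - u)" using \<eta>f(2)[of "qf (U, \<psi> u)" u us] q us(1) by blast
          moreover have "\<epsilon> \<le> \<eta>f (qf (U, \<psi> u))" using \<epsilon>le \<open>(U, \<psi> u) \<in> BP\<close> by blast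
          ultimately show False using us(2) by linarith
        qed
        then show ?thesis unfolding cell_reports_def level_set_def cell_region_def by blast
      qed
      then show ?thesis by (rule thick_PsiI)
    qed
    have ie: "indirectly_elicits L (prop_of l)"
      unfolding indirectly_elicits_def
    proof
      fix u
      have "p \<in> level_set (prop_of l) (\<psi> u)" if p: "p \<in> level_set (prop_of L) u" for p
      proof -
        have ps: "p \<in> prob_simplex" and um: "\<And>r'. expected p (L u) \<le> expected p (L r')"
          using p unfolding level_set_def prop_of_def by auto
        have "\<psi> u \<in> prop_of l p"
        proof (rule ccontr)
          assume "\<psi> u \<notin> prop_of l p"
          then have "(INF v\<in>{v. \<psi> v \<notin> prop_of l p}. ereal (expected p (L v))) \<le> ereal (expected p (L u))"
            by (intro INF_lower) simp
          also have "\<dots> = (INF v. ereal (expected p (L v)))"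
            using INF_min_ereal[of "\<lambda>v. expected p (L v)" u, OF um] by simp
          finally have le: "(INF v\<in>{v. \<psi> v \<notin> prop_of l p}. ereal (expected p (L v))) \<le> (INF v. ereal (expected p (L v)))" .
          have "(INF v. ereal (expected p (L v))) < (INF v\<in>{v. \<psi> v \<notin> prop_of l p}. ereal (expected p (L v)))"
            using cal ps unfolding calibrated_def by blast
          then show False using le by simp
        qed
        then show ?thesis using ps unfolding level_set_def by blast
      qed
      then show "\<exists>r. level_set (prop_of L) u \<subseteq> level_set (prop_of l) r" by blast
    qed
    have "produced_by_thickened_link L (prop_of l) \<epsilon> N \<psi>"
      unfolding produced_by_thickened_link_def using ie \<epsilon>pos assms(3) inPsi by blast
    then show "\<exists>\<epsilon>>0. produced_by_thickened_link L (prop_of l) \<epsilon> N \<psi>" using \<epsilon>pos by blast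
  next
    assume "\<exists>\<epsilon>>0. produced_by_thickened_link L (prop_of l) \<epsilon> N \<psi>"
    then obtain \<epsilon> where \<epsilon>: "\<epsilon> > 0" and pr: "produced_by_thickened_link L (prop_of l) \<epsilon> N \<psi>" by blast
    have inPsi: "\<And>u. \<psi> u \<in> thick_Psi L (prop_of l) \<epsilon> N u"
      using pr unfolding produced_by_thickened_link_def by blast
    show "calibrated L \<psi> l" unfolding calibrated_def
    proof
      fix p :: "'y \<Rightarrow> real" assume p: "p \<in> prob_simplex"
      obtain z where zmin: "\<And>u. expected p (L z) \<le> expected p (L u)"
        and sharp: "\<forall>\<epsilon>>0. \<exists>\<delta>>0. \<forall>u. expected p (L u) < expected p (L z) + \<delta> \<longrightarrow>
          (\<exists>z'. expected p (L z') = expected p (L z) \<and> dist u z' < \<epsilon>)"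
        using minex[OF p] by blast
      define U where "U = prop_of L p"
      have UC: "U \<in> cells L" unfolding U_def cells_def using p by blast
      have pU: "p \<in> cell_region L U" unfolding cell_region_def U_def using p by blast
      obtain \<delta> where \<delta>: "\<delta> > 0" "\<And>u. expected p (L u) < expected p (L z) + \<delta> \<Longrightarrow>
          (\<exists>z'. expected p (L z') = expected p (L z) \<and> dist u z' < \<epsilon> / Cn)"
        using sharp \<epsilon> Cn(1) by (meson divide_pos_pos)
      have big: "expected p (L z) + \<delta> \<le> expected p (L u)" if bad: "\<psi> u \<notin> prop_of l p" for u
      proof (rule ccontr)
        assume nb: "\<not> ?thesis"
        obtain z' where z': "expected p (L z') = expected p (L z)" "dist u z' < \<epsilon> / Cn"
          using \<delta>(2)[of u] nb by (auto simp: not_le)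
        have "z' \<in> U" unfolding U_def prop_of_def using z'(1) zmin by simp
        have "N (z' - u) \<le> Cn * norm (z' - u)" by (rule Cn(2))
        also have "norm (z' - u) = dist u z'" by (simp add: dist_norm norm_minus_commute)
        also have "Cn * dist u z' < Cn * (\<epsilon> / Cn)" using z'(2) Cn(1) by (rule mult_strict_left_mono)
        also have "\<dots> = \<epsilon>" using Cn(1) by simp
        finally have "N (z' - u) < \<epsilon>" .
        then have "(INF us\<in>U. ereal (N (us - u))) < ereal \<epsilon>"
          using \<open>z' \<in> U\<close> by (auto simp: INF_less_iff)
        then have "\<psi> u \<in> cell_reports L (prop_of l) U"
          by (rule thick_PsiD[OF inPsi UC])
        then have "\<psi> u \<in> prop_of l p" using pU unfolding cell_reports_def level_set_def by blast
        then show False using bad by blast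
      qed
      have "ereal (expected p (L z) + \<delta>) \<le> (INF u\<in>{u. \<psi> u \<notin> prop_of l p}. ereal (expected p (L u)))"
        using big by (intro INF_greatest) simp
      moreover have eq: "(INF u. ereal (expected p (L u))) = ereal (expected p (L z))"
        using INF_min_ereal[of "\<lambda>u. expected p (L u)" z] zmin by blast
      have "ereal (expected p (L z)) < ereal (expected p (L z) + \<delta>)" using \<delta>(1) by simp
      then have "ereal (expected p (L z)) < (INF u\<in>{u. \<psi> u \<notin> prop_of l p}. ereal (expected p (L u)))"
        using calculation(1) by (rule less_le_trans)
      then show "(INF u\<in>{u. \<psi> u \<notin> prop_of l p}. ereal (expected p (L u))) > (INF u. ereal (expected p (L u)))"
        unfolding eq .
    qed
  qed
qed


end
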